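(* Let $\mathcal G$ be the class of all finite connected graphs, with the fixed class of epimorphisms between them being the confluent epimorphisms. Then $\mathcal G$ is a projective Fraïssé class.
   Context: A graph is a pair $A=(V(A),E(A))$ where $E(A)\subseteq V(A)^2$ is a reflexive and symmetric relation; elements of $E(A)$ are edges. A homomorphism $f\colon A\to B$ maps edges to edges; an epimorphism is a homomorphism that is surjective both on vertices and on edges; an isomorphism is an injective epimorphism. A subset $S\subseteq V(A)$ is disconnected if there are nonempty closed subsets $P,Q$ of $S$ with $P\cup Q=S$ such that $\langle a,b\rangle\notin E(A)$ whenever $a\in P$, $b\in Q$; otherwise $S$ is connected; $A$ is connected if $V(A)$ is. The component of $S$ containing $a$ is the union of all connected subsets of $S$ containing $a$. An epimorphism $f\colon A\to B$ is confluent if for every connected $Q\subseteq V(B)$ and every component $C$ of $f^{-1}(Q)$ we have $f(C)=Q$. A class $\mathcal F$ of finite graphs with a fixed class of epimorphisms between its members is a projective Fraïssé class if: (1) $\mathcal F$ contains only countably many members up to isomorphism; (2) the fixed epimorphisms are closed under composition and contain all identity maps; (3) for all $B,C\in\mathcal F$ there are $D\in\mathcal F$ and fixed epimorphisms $D\to B$, $D\to C$; (4) (projective amalgamation) for all $A,B,C\in\mathcal F$ and fixed epimorphisms $f\colon B\to A$, $g\colon C\to A$ there are $D\in\mathcal F$ and fixed epimorphisms $f_0\colon D\to B$, $g_0\colon D\to C$ with $f\circ f_0=g\circ g_0$. *)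

theory Defs
  imports Main "HOL-Library.Countable_Set"
begin

type_synonym 'a graph = "'a set \<times> ('a \<times> 'a) set"

definition gV :: "'a graph \<Rightarrow> 'a set" where "gV A = fst A"
definition gE :: "'a graph \<Rightarrow> ('a \<times> 'a) set" where "gE A = snd A"

definition is_graph :: "'a graph \<Rightarrow> bool" where
  "is_graph A \<longleftrightarrow> gE A \<subseteq> gV A \<times> gV A \<and> (\<forall>a\<in>gV A. (a, a) \<in> gE A)
     \<and> (\<forall>a b. (a, b) \<in> gE A \<longrightarrow> (b, a) \<in> gE A)"

definition homomorphism :: "'a graph \<Rightarrow> 'b graph \<Rightarrow> ('a \<Rightarrow> 'b) \<Rightarrow> bool" where
  "homomorphism A B f \<longleftrightarrow> f ` gV A \<subseteq> gV B \<and> (\<forall>(a, b)\<in>gE A. (f a, f b) \<in> gE B)"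

definition epimorphism :: "'a graph \<Rightarrow> 'b graph \<Rightarrow> ('a \<Rightarrow> 'b) \<Rightarrow> bool" where
  "epimorphism A B f \<longleftrightarrow> homomorphism A B f \<and> f ` gV A = gV B
     \<and> (\<lambda>(a, b). (f a, f b)) ` gE A = gE B"

definition isomorphism :: "'a graph \<Rightarrow> 'b graph \<Rightarrow> ('a \<Rightarrow> 'b) \<Rightarrow> bool" where
  "isomorphism A B f \<longleftrightarrow> epimorphism A B f \<and> inj_on f (gV A)"

text \<open>For finite graphs (discrete topology) every subset is closed.\<close>
definition connected_in :: "'a graph \<Rightarrow> 'a set \<Rightarrow> bool" where
  "connected_in A S \<longleftrightarrow> \<not> (\<exists>P Q. P \<noteq> {} \<and> Q \<noteq> {} \<and> P \<union> Q = S
       \<and> (\<forall>a\<in>P. \<forall>b\<in>Q. (a, b) \<notin> gE A))"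

definition graph_connected :: "'a graph \<Rightarrow> bool" where
  "graph_connected A \<longleftrightarrow> connected_in A (gV A)"

definition component_of :: "'a graph \<Rightarrow> 'a set \<Rightarrow> 'a \<Rightarrow> 'a set" where
  "component_of A S a = \<Union>{C. C \<subseteq> S \<and> connected_in A C \<and> a \<in> C}"

definition is_component :: "'a graph \<Rightarrow> 'a set \<Rightarrow> 'a set \<Rightarrow> bool" where
  "is_component A S C \<longleftrightarrow> (\<exists>a\<in>S. C = component_of A S a)"

definition confluent :: "'a graph \<Rightarrow> 'b graph \<Rightarrow> ('a \<Rightarrow> 'b) \<Rightarrow> bool" where
  "confluent A B f \<longleftrightarrow> epimorphism A B f \<and>
     (\<forall>Q. Q \<subseteq> gV B \<and> connected_in B Q \<longrightarrow>
        (\<forall>C. is_component A (gV A \<inter> f -` Q) C \<longrightarrow> f ` C = Q))"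

text \<open>Projective Fraisse class: K a class of finite graphs, Epi the fixed epimorphisms.
  Equality of composites is required on the vertex set of the domain.\<close>
definition projective_Fraisse_class ::
  "'a graph set \<Rightarrow> ('a graph \<Rightarrow> 'a graph \<Rightarrow> ('a \<Rightarrow> 'a) \<Rightarrow> bool) \<Rightarrow> bool" where
  "projective_Fraisse_class K Epi \<longleftrightarrow>
     (\<forall>A\<in>K. is_graph A \<and> finite (gV A)) \<and>
     (\<forall>A B f. Epi A B f \<longrightarrow> epimorphism A B f) \<and>
     (\<exists>S. countable S \<and> S \<subseteq> K \<and> (\<forall>A\<in>K. \<exists>B\<in>S. \<exists>h. isomorphism A B h)) \<and>
     (\<forall>A\<in>K. \<forall>B\<in>K. \<forall>C\<in>K. \<forall>f g. Epi A B f \<and> Epi B C g \<longrightarrow> Epi A C (g \<circ> f)) \<and>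
     (\<forall>A\<in>K. Epi A A id) \<and>
     (\<forall>B\<in>K. \<forall>C\<in>K. \<exists>D\<in>K. \<exists>f g. Epi D B f \<and> Epi D C g) \<and>
     (\<forall>A\<in>K. \<forall>B\<in>K. \<forall>C\<in>K. \<forall>f g. Epi B A f \<and> Epi C A g \<longrightarrow>
        (\<exists>D\<in>K. \<exists>f0 g0. Epi D B f0 \<and> Epi D C g0 \<and> (\<forall>x\<in>gV D. f (f0 x) = g (g0 x))))"

definition finite_connected_graphs :: "nat graph set" where
  "finite_connected_graphs = {A. is_graph A \<and> finite (gV A) \<and> gV A \<noteq> {} \<and> graph_connected A}"

end

theory Submission
  imports Defs
begin

lemma gV_pair[simp]: "gV (V, E) = V" by (simp add: gV_def)
lemma gE_pair[simp]: "gE (V, E) = E" by (simp add: gE_def)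

lemma graph_sym: "is_graph A \<Longrightarrow> (x, y) \<in> gE A \<Longrightarrow> (y, x) \<in> gE A"
  unfolding is_graph_def by simp
lemma graph_refl: "is_graph A \<Longrightarrow> x \<in> gV A \<Longrightarrow> (x, x) \<in> gE A"
  unfolding is_graph_def by simp
lemma graph_edgeV: "is_graph A \<Longrightarrow> (x, y) \<in> gE A \<Longrightarrow> x \<in> gV A \<and> y \<in> gV A"
  unfolding is_graph_def by auto
lemma conn_pair: "is_graph A \<Longrightarrow> (a, b) \<in> gE A \<Longrightarrow> connected_in A {a, b}"
proof -
  assume g: "is_graph A" and ab: "(a, b) \<in> gE A"
  have ba: "(b, a) \<in> gE A" using g ab by (rule graph_sym)
  have aV: "a \<in> gV A" "b \<in> gV A" using graph_edgeV[OF g ab] by simp_all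
  have aa: "(a, a) \<in> gE A" "(b, b) \<in> gE A" using graph_refl[OF g] aV by simp_all
  have all: "\<forall>x\<in>{a,b}. \<forall>y\<in>{a,b}. (x, y) \<in> gE A" using ab ba aa by simp
  show ?thesis unfolding connected_in_def
  proof (intro notI, elim exE conjE)
    fix P Q assume h: "P \<noteq> {}" "Q \<noteq> {}" "P \<union> Q = {a, b}" "\<forall>x\<in>P. \<forall>y\<in>Q. (x, y) \<notin> gE A"
    obtain x where x: "x \<in> P" using h(1) by blast
    obtain y where y: "y \<in> Q" using h(2) by blast
    have "x \<in> {a,b}" using x h(3) by (metis UnI1)
    moreover have "y \<in> {a,b}" using y h(3) by (metis UnI2)
    ultimately have "(x, y) \<in> gE A" using all by blast
    then show False using h(4) x y by blast
  qed
qed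

lemma conn_single: "is_graph A \<Longrightarrow> a \<in> gV A \<Longrightarrow> connected_in A {a}"
  using conn_pair[of A a a] graph_refl[of A a] by simp

lemma conn_Union:
  assumes "\<forall>C\<in>F. connected_in A C" "\<forall>C\<in>F. x \<in> C"
  shows "connected_in A (\<Union>F)"
  unfolding connected_in_def
proof
  assume "\<exists>P Q. P \<noteq> {} \<and> Q \<noteq> {} \<and> P \<union> Q = \<Union>F \<and> (\<forall>a\<in>P. \<forall>b\<in>Q. (a, b) \<notin> gE A)"
  then obtain P Q where h: "P \<noteq> {}" "Q \<noteq> {}" "P \<union> Q = \<Union>F" "\<forall>a\<in>P. \<forall>b\<in>Q. (a, b) \<notin> gE A"
    by blast
  have split: "C \<inter> P = {} \<or> C \<inter> Q = {}" if C: "C \<in> F" for C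
  proof (rule ccontr)
    assume n: "\<not> (C \<inter> P = {} \<or> C \<inter> Q = {})"
    have e: "(C \<inter> P) \<union> (C \<inter> Q) = C" using C h(3) by blast
    have "\<forall>a\<in>C \<inter> P. \<forall>b\<in>C \<inter> Q. (a, b) \<notin> gE A" using h(4) by blast
    then have "\<exists>P' Q'. P' \<noteq> {} \<and> Q' \<noteq> {} \<and> P' \<union> Q' = C \<and> (\<forall>a\<in>P'. \<forall>b\<in>Q'. (a, b) \<notin> gE A)"
      using n e by (intro exI[of _ "C \<inter> P"] exI[of _ "C \<inter> Q"]) simp
    moreover have "connected_in A C" using assms(1) C by blast
    ultimately show False unfolding connected_in_def by blast
  qed
  obtain p where p: "p \<in> P" using h(1) by blast
  then obtain C0 where C0: "C0 \<in> F" using h(3) by blast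
  have "x \<in> \<Union>F" using C0 assms(2) by blast
  then have "x \<in> P \<union> Q" using h(3) by simp
  then show False
  proof
    assume xP: "x \<in> P"
    obtain q where q: "q \<in> Q" using h(2) by blast
    then have "q \<in> \<Union>F" using h(3) by blast
    then obtain C where C: "C \<in> F" "q \<in> C" by blast
    have "x \<in> C" using C assms(2) by blast
    then show False using split[OF C(1)] xP q C(2) by blast
  next
    assume xQ: "x \<in> Q"
    have "p \<in> \<Union>F" using h(3) p by blast
    then obtain C where C: "C \<in> F" "p \<in> C" by blast
    have "x \<in> C" using C assms(2) by blast
    then show False using split[OF C(1)] xQ p C(2) by blast
  qed
qed

lemma conn_image:
  assumes "connected_in A S" "\<forall>x\<in>S. \<forall>y\<in>S. (x, y) \<in> gE A \<longrightarrow> (h x, h y) \<in> gE B"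
  shows "connected_in B (h ` S)"
  unfolding connected_in_def
proof
  assume "\<exists>P Q. P \<noteq> {} \<and> Q \<noteq> {} \<and> P \<union> Q = h ` S \<and> (\<forall>a\<in>P. \<forall>b\<in>Q. (a, b) \<notin> gE B)"
  then obtain P Q where hh: "P \<noteq> {}" "Q \<noteq> {}" "P \<union> Q = h ` S" "\<forall>a\<in>P. \<forall>b\<in>Q. (a, b) \<notin> gE B"
    by blast
  obtain p where p: "p \<in> P" using hh(1) by blast
  then have "p \<in> h ` S" using hh(3) by blast
  then have 1: "S \<inter> h -` P \<noteq> {}" using p by auto
  obtain q where q: "q \<in> Q" using hh(2) by blast
  then have "q \<in> h ` S" using hh(3) by blast
  then have 2: "S \<inter> h -` Q \<noteq> {}" using q by auto
  have 3: "(S \<inter> h -` P) \<union> (S \<inter> h -` Q) = S"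
    using hh(3) by auto
  have 4: "\<forall>a\<in>S \<inter> h -` P. \<forall>b\<in>S \<inter> h -` Q. (a, b) \<notin> gE A"
    using hh(4) assms(2) by auto
  have "\<exists>P' Q'. P' \<noteq> {} \<and> Q' \<noteq> {} \<and> P' \<union> Q' = S \<and> (\<forall>a\<in>P'. \<forall>b\<in>Q'. (a, b) \<notin> gE A)"
    using 1 2 3 4 by (intro exI[of _ "S \<inter> h -` P"] exI[of _ "S \<inter> h -` Q"]) simp
  then show False using assms(1) unfolding connected_in_def by blast
qed

lemma conn_cong:
  assumes "\<forall>x\<in>S. \<forall>y\<in>S. (x, y) \<in> gE A \<longleftrightarrow> (x, y) \<in> gE B"
  shows "connected_in A S \<longleftrightarrow> connected_in B S"
proof -
  have *: "(P \<noteq> {} \<and> Q \<noteq> {} \<and> P \<union> Q = S \<and> (\<forall>a\<in>P. \<forall>b\<in>Q. (a, b) \<notin> gE A)) \<longleftrightarrow>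
           (P \<noteq> {} \<and> Q \<noteq> {} \<and> P \<union> Q = S \<and> (\<forall>a\<in>P. \<forall>b\<in>Q. (a, b) \<notin> gE B))" for P Q
  proof (cases "P \<union> Q = S")
    case True
    then show ?thesis using assms by auto
  qed simp
  show ?thesis unfolding connected_in_def by (simp only: *)
qed

lemma comp_sub: "component_of A S a \<subseteq> S"
  unfolding component_of_def by blast

lemma comp_conn: "connected_in A (component_of A S a)"
  unfolding component_of_def by (rule conn_Union) auto

lemma comp_max: "connected_in A T \<Longrightarrow> T \<subseteq> S \<Longrightarrow> a \<in> T \<Longrightarrow> T \<subseteq> component_of A S a"
  unfolding component_of_def by blast

lemma comp_mem: "is_graph A \<Longrightarrow> a \<in> S \<Longrightarrow> a \<in> gV A \<Longrightarrow> a \<in> component_of A S a"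
  using comp_max[of A "{a}" S a] conn_single[of A a] by simp

lemma comp_max2:
  assumes "connected_in A T" "T \<subseteq> S" "x \<in> T" "x \<in> component_of A S a"
  shows "T \<subseteq> component_of A S a"
proof -
  have ain: "a \<in> component_of A S a" using assms(4) unfolding component_of_def by blast
  have c2: "connected_in A (component_of A S a)" by (rule comp_conn)
  have "connected_in A (\<Union>{T, component_of A S a})"
    by (rule conn_Union[where x=x]) (use assms(1,3,4) c2 in auto)
  moreover have "\<Union>{T, component_of A S a} \<subseteq> S" using assms(2) comp_sub[of A S a] by simp
  moreover have "a \<in> \<Union>{T, component_of A S a}" using ain by simp
  ultimately have "\<Union>{T, component_of A S a} \<subseteq> component_of A S a"
    by (rule comp_max)
  then show ?thesis by simp
qed


lemma epi_comp:
  assumes f: "epimorphism A B f" and g: "epimorphism B C g"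
  shows "epimorphism A C (g \<circ> f)"
proof -
  have fv: "f ` gV A = gV B" and gv: "g ` gV B = gV C"
    and fe: "(\<lambda>(a, b). (f a, f b)) ` gE A = gE B" and ge: "(\<lambda>(a, b). (g a, g b)) ` gE B = gE C"
    using f g unfolding epimorphism_def by auto
  have v: "(g \<circ> f) ` gV A = gV C" using fv gv by (metis image_comp)
  have cmp: "(\<lambda>(a, b). ((g \<circ> f) a, (g \<circ> f) b)) = (\<lambda>(a, b). (g a, g b)) \<circ> (\<lambda>(a, b). (f a, f b))"
    by (auto simp: fun_eq_iff)
  have e: "(\<lambda>(a, b). ((g \<circ> f) a, (g \<circ> f) b)) ` gE A = gE C"
    unfolding cmp image_comp[symmetric] fe ge ..
  have h: "homomorphism A C (g \<circ> f)"
    unfolding homomorphism_def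
  proof
    show "(g \<circ> f) ` gV A \<subseteq> gV C" using v by simp
    show "\<forall>(a, b)\<in>gE A. ((g \<circ> f) a, (g \<circ> f) b) \<in> gE C"
    proof
      fix p assume "p \<in> gE A"
      then have "(\<lambda>(a, b). ((g \<circ> f) a, (g \<circ> f) b)) p \<in> gE C" using e by blast
      then show "case p of (a, b) \<Rightarrow> ((g \<circ> f) a, (g \<circ> f) b) \<in> gE C" by (cases p) simp
    qed
  qed
  show ?thesis unfolding epimorphism_def using h v e by simp
qed

lemma conf_comp:
  assumes gA: "is_graph A" and gB: "is_graph B"
    and f: "confluent A B f" and g: "confluent B C g"
  shows "confluent A C (g \<circ> f)"
  unfolding confluent_def
proof (intro conjI allI impI)
  have ef: "epimorphism A B f" and eg: "epimorphism B C g" using f g unfolding confluent_def by auto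
  then show "epimorphism A C (g \<circ> f)" by (rule epi_comp)
  have hf: "homomorphism A B f" using ef unfolding epimorphism_def by simp
  fix Q K
  assume Q: "Q \<subseteq> gV C \<and> connected_in C Q" and K: "is_component A (gV A \<inter> (g \<circ> f) -` Q) K"
  obtain a where a: "a \<in> gV A \<inter> (g \<circ> f) -` Q" and Kd: "K = component_of A (gV A \<inter> (g \<circ> f) -` Q) a"
    using K unfolding is_component_def by blast
  define L where "L = component_of B (gV B \<inter> g -` Q) (f a)"
  have faV: "f a \<in> gV B" using hf a unfolding homomorphism_def by blast
  have faL: "f a \<in> L" unfolding L_def using a faV by (intro comp_mem[OF gB]) auto
  have Lsub: "L \<subseteq> gV B \<inter> g -` Q" unfolding L_def by (rule comp_sub)
  have Lconn: "connected_in B L" unfolding L_def by (rule comp_conn)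
  have aK: "a \<in> K" unfolding Kd using a by (intro comp_mem[OF gA]) auto
  have Ksub: "K \<subseteq> gV A \<inter> (g \<circ> f) -` Q" unfolding Kd by (rule comp_sub)
  have Kconn: "connected_in A K" unfolding Kd by (rule comp_conn)
  have hfK: "\<forall>x\<in>K. \<forall>y\<in>K. (x, y) \<in> gE A \<longrightarrow> (f x, f y) \<in> gE B"
    using hf unfolding homomorphism_def by blast
  have fKconn: "connected_in B (f ` K)" using Kconn hfK by (rule conn_image)
  have fKsub: "f ` K \<subseteq> gV B \<inter> g -` Q" using Ksub hf unfolding homomorphism_def by auto
  have fKL: "f ` K \<subseteq> L" unfolding L_def using fKconn fKsub aK by (intro comp_max) auto
  define K' where "K' = component_of A (gV A \<inter> f -` L) a"
  have "a \<in> gV A \<inter> f -` L" using a faL by simp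
  then have isc: "is_component A (gV A \<inter> f -` L) K'" unfolding is_component_def K'_def by blast
  have fK': "f ` K' = L" using f Lsub Lconn isc unfolding confluent_def by blast
  have K'sub: "K' \<subseteq> gV A \<inter> f -` L" unfolding K'_def by (rule comp_sub)
  have "K' \<subseteq> K" unfolding Kd
  proof (rule comp_max)
    show "connected_in A K'" unfolding K'_def by (rule comp_conn)
    show "K' \<subseteq> gV A \<inter> (g \<circ> f) -` Q" using K'sub Lsub by auto
    show "a \<in> K'" unfolding K'_def using \<open>a \<in> gV A \<inter> f -` L\<close> by (intro comp_mem[OF gA]) auto
  qed
  moreover have "K \<subseteq> K'" unfolding K'_def
  proof (rule comp_max)
    show "connected_in A K" by (rule Kconn)
    show "K \<subseteq> gV A \<inter> f -` L" using Ksub fKL by auto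
    show "a \<in> K" by (rule aK)
  qed
  ultimately have "K = K'" by (rule subset_antisym[rotated])
  then have fK: "f ` K = L" using fK' by simp
  have "f a \<in> gV B \<inter> g -` Q" using faL Lsub by blast
  then have "is_component B (gV B \<inter> g -` Q) L" unfolding is_component_def L_def by blast
  then have "g ` L = Q" using g Q unfolding confluent_def by blast
  then show "(g \<circ> f) ` K = Q" using fK by (metis image_comp)
qed

lemma conf_id:
  assumes gA: "is_graph A"
  shows "confluent A A id"
  unfolding confluent_def
proof (intro conjI allI impI)
  show "epimorphism A A id"
    unfolding epimorphism_def homomorphism_def by (auto simp: case_prod_beta)
  fix Q K assume Q: "Q \<subseteq> gV A \<and> connected_in A Q" and K: "is_component A (gV A \<inter> id -` Q) K"
  obtain a where a: "a \<in> gV A \<inter> id -` Q" and Kd: "K = component_of A (gV A \<inter> id -` Q) a"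
    using K unfolding is_component_def by blast
  have S: "gV A \<inter> id -` Q = Q" using Q by auto
  have "K \<subseteq> Q" unfolding Kd S by (rule comp_sub)
  moreover have "Q \<subseteq> K" unfolding Kd S using Q a by (intro comp_max) auto
  ultimately show "id ` K = Q" by simp
qed


lemma conn_edge:
  assumes "connected_in A S" "P \<noteq> {}" "Q \<noteq> {}" "P \<union> Q = S"
  shows "\<exists>a\<in>P. \<exists>b\<in>Q. (a, b) \<in> gE A"
proof (rule ccontr)
  assume "\<not> ?thesis"
  then have n: "\<forall>a\<in>P. \<forall>b\<in>Q. (a, b) \<notin> gE A" by blast
  have ex: "\<exists>P Q. P \<noteq> {} \<and> Q \<noteq> {} \<and> P \<union> Q = S \<and> (\<forall>a\<in>P. \<forall>b\<in>Q. (a, b) \<notin> gE A)"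
    using assms(2,3,4) n by (intro exI[of _ P] exI[of _ Q]) simp
  have "\<not> (\<exists>P Q. P \<noteq> {} \<and> Q \<noteq> {} \<and> P \<union> Q = S \<and> (\<forall>a\<in>P. \<forall>b\<in>Q. (a, b) \<notin> gE A))"
    using assms(1) unfolding connected_in_def .
  then show False using ex by (rule notE)
qed

definition pbV :: "nat graph \<Rightarrow> nat graph \<Rightarrow> (nat \<Rightarrow> nat) \<Rightarrow> (nat \<Rightarrow> nat) \<Rightarrow> (nat \<Rightarrow> nat \<Rightarrow> nat) \<Rightarrow> nat set" where
  "pbV B C f g e = {e b c | b c. b \<in> gV B \<and> c \<in> gV C \<and> f b = g c}"

definition pbE :: "nat graph \<Rightarrow> nat graph \<Rightarrow> (nat \<Rightarrow> nat) \<Rightarrow> (nat \<Rightarrow> nat) \<Rightarrow> (nat \<Rightarrow> nat \<Rightarrow> nat) \<Rightarrow> (nat \<times> nat) set" where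
  "pbE B C f g e = {(e b c, e b' c') | b c b' c'. b \<in> gV B \<and> c \<in> gV C \<and> f b = g c \<and>
      b' \<in> gV B \<and> c' \<in> gV C \<and> f b' = g c' \<and> (b, b') \<in> gE B \<and> (c, c') \<in> gE C}"

lemma pbV_iff: "x \<in> pbV B C f g e \<longleftrightarrow> (\<exists>b c. x = e b c \<and> b \<in> gV B \<and> c \<in> gV C \<and> f b = g c)"
  unfolding pbV_def by (rule mem_Collect_eq)

lemma pbE_iff: "(x, y) \<in> pbE B C f g e \<longleftrightarrow> (\<exists>b c b' c'. x = e b c \<and> y = e b' c' \<and> b \<in> gV B \<and> c \<in> gV C \<and> f b = g c \<and>
      b' \<in> gV B \<and> c' \<in> gV C \<and> f b' = g c' \<and> (b, b') \<in> gE B \<and> (c, c') \<in> gE C)"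
  unfolding pbE_def by auto

lemma pbV_swap: "pbV C B g f (\<lambda>c b. e b c) = pbV B C f g e"
proof (rule set_eqI)
  fix x
  show "x \<in> pbV C B g f (\<lambda>c b. e b c) \<longleftrightarrow> x \<in> pbV B C f g e"
    unfolding pbV_iff
  proof
    assume "\<exists>c b. x = e b c \<and> c \<in> gV C \<and> b \<in> gV B \<and> g c = f b"
    then obtain c b where h: "x = e b c" "c \<in> gV C" "b \<in> gV B" "g c = f b" by blast
    show "\<exists>b c. x = e b c \<and> b \<in> gV B \<and> c \<in> gV C \<and> f b = g c"
      using h by (intro exI[of _ b] exI[of _ c]) simp
  next
    assume "\<exists>b c. x = e b c \<and> b \<in> gV B \<and> c \<in> gV C \<and> f b = g c"
    then obtain c b where h: "x = e b c" "c \<in> gV C" "b \<in> gV B" "g c = f b" by auto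
    show "\<exists>c b. x = e b c \<and> c \<in> gV C \<and> b \<in> gV B \<and> g c = f b"
      using h by (intro exI[of _ c] exI[of _ b]) simp
  qed
qed

lemma pbE_swap: "pbE C B g f (\<lambda>c b. e b c) = pbE B C f g e"
  unfolding pbE_def by fastforce

context
  fixes A B C :: "nat graph" and f g :: "nat \<Rightarrow> nat" and e :: "nat \<Rightarrow> nat \<Rightarrow> nat"
    and pr :: "nat \<Rightarrow> nat" and v0 :: nat
  assumes gA: "is_graph A" and gB: "is_graph B" and gC: "is_graph C"
    and hf: "homomorphism B A f" and cg: "confluent C A g"
    and pr_e: "\<And>b c. pr (e b c) = b"
    and v0: "v0 \<in> pbV B C f g e"
begin

abbreviation "V0 \<equiv> pbV B C f g e"
abbreviation "E0 \<equiv> pbE B C f g e"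
abbreviation "Ds \<equiv> component_of (V0, E0) V0 v0"
abbreviation "DD \<equiv> (Ds, E0 \<inter> Ds \<times> Ds)"

lemma D0_graph: "is_graph (V0, E0)"
  unfolding is_graph_def gV_pair gE_pair
proof (intro conjI ballI allI impI subsetI)
  fix p assume "p \<in> E0"
  then obtain x y where p: "p = (x, y)" and "(x, y) \<in> E0" by (cases p) auto
  then obtain b c b' c' where h: "x = e b c" "y = e b' c'" "b \<in> gV B" "c \<in> gV C" "f b = g c"
      "b' \<in> gV B" "c' \<in> gV C" "f b' = g c'"
    unfolding pbE_iff by blast
  have "x \<in> V0" "y \<in> V0" unfolding pbV_iff using h by blast+
  then show "p \<in> V0 \<times> V0" using p by simp
next
  fix x assume "x \<in> V0"
  then obtain b c where x: "x = e b c" "b \<in> gV B" "c \<in> gV C" "f b = g c" unfolding pbV_iff by blast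
  have "(b, b) \<in> gE B" "(c, c) \<in> gE C" using graph_refl[OF gB x(2)] graph_refl[OF gC x(3)] by auto
  then show "(x, x) \<in> E0" unfolding pbE_iff using x by blast
next
  fix x y assume "(x, y) \<in> E0"
  then obtain b c b' c' where h: "x = e b c" "y = e b' c'" "b \<in> gV B" "c \<in> gV C" "f b = g c"
      "b' \<in> gV B" "c' \<in> gV C" "f b' = g c'" "(b, b') \<in> gE B" "(c, c') \<in> gE C"
    unfolding pbE_iff by blast
  have "(b', b) \<in> gE B" "(c', c) \<in> gE C" using graph_sym[OF gB h(9)] graph_sym[OF gC h(10)] by auto
  then show "(y, x) \<in> E0" unfolding pbE_iff using h by blast
qed

lemma Ds_sub: "Ds \<subseteq> V0" by (rule comp_sub)

lemma v0_Ds: "v0 \<in> Ds" using v0 by (intro comp_mem[OF D0_graph]) auto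

lemma Ds_conn0: "connected_in (V0, E0) Ds" by (rule comp_conn)

lemma D_graph: "is_graph DD"
  using D0_graph Ds_sub unfolding is_graph_def by auto

lemma connD: "T \<subseteq> Ds \<Longrightarrow> connected_in DD T \<longleftrightarrow> connected_in (V0, E0) T"
  by (rule conn_cong) auto

lemma D_connected: "graph_connected DD"
  unfolding graph_connected_def gV_pair using connD[of Ds] Ds_conn0 by simp

lemma lift:
  assumes b: "b \<in> gV B" "c \<in> gV C" "f b = g c" and bb': "(b, b') \<in> gE B"
  shows "\<exists>T. T \<subseteq> V0 \<and> connected_in (V0, E0) T \<and> e b c \<in> T \<and> (\<forall>t\<in>T. pr t = b \<or> pr t = b')
           \<and> (\<exists>t\<in>T. pr t = b')"
proof -
  have b'V: "b' \<in> gV B" using graph_edgeV[OF gB bb'] by simp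
  have hfe: "(f b, f b') \<in> gE A" using hf bb' unfolding homomorphism_def by blast
  have all4: "\<forall>u\<in>{b,b'}. \<forall>w\<in>{b,b'}. (u, w) \<in> gE B"
    using bb' graph_sym[OF gB bb'] graph_refl[OF gB] b(1) b'V by auto
  show ?thesis
  proof (cases "f b = f b'")
    case True
    have m1: "e b c \<in> V0" unfolding pbV_iff using b by blast
    have m2: "e b' c \<in> V0" unfolding pbV_iff using b b'V True by auto
    have "(c, c) \<in> gE C" using graph_refl[OF gC b(2)] .
    then have ed: "(e b c, e b' c) \<in> E0" unfolding pbE_iff using b b'V True bb' by auto
    have "connected_in (V0, E0) {e b c, e b' c}" using conn_pair[OF D0_graph] ed by simp
    then show ?thesis using m1 m2 pr_e
      by (intro exI[of _ "{e b c, e b' c}"]) auto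
  next
    case False
    let ?Q = "{f b, f b'}"
    have Qc: "connected_in A ?Q" by (rule conn_pair[OF gA hfe])
    have QV: "?Q \<subseteq> gV A" using graph_edgeV[OF gA hfe] by simp
    define S where "S = gV C \<inter> g -` ?Q"
    define K0 where "K0 = component_of C S c"
    have cS: "c \<in> S" unfolding S_def using b by simp
    have cK0: "c \<in> K0" unfolding K0_def using cS b(2) by (intro comp_mem[OF gC])
    have K0S: "K0 \<subseteq> S" unfolding K0_def by (rule comp_sub)
    have K0c: "connected_in C K0" unfolding K0_def by (rule comp_conn)
    have "is_component C S K0" unfolding is_component_def K0_def using cS by blast
    then have gK0: "g ` K0 = ?Q" using cg Qc QV unfolding confluent_def S_def by blast
    have "f b' \<in> g ` K0" using gK0 by simp
    then obtain c' where c': "c' \<in> K0" "g c' = f b'" by auto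
    define bx where "bx = (\<lambda>x. if g x = f b then b else b')"
    define phi where "phi = (\<lambda>x. e (bx x) x)"
    have bxp: "bx x \<in> gV B \<and> f (bx x) = g x \<and> bx x \<in> {b, b'} \<and> x \<in> gV C" if "x \<in> K0" for x
    proof -
      have "x \<in> gV C" "g x = f b \<or> g x = f b'" using that K0S unfolding S_def by auto
      then show ?thesis unfolding bx_def using b(1) b'V by auto
    qed
    have TV: "phi ` K0 \<subseteq> V0"
    proof
      fix t assume "t \<in> phi ` K0"
      then obtain x where x: "x \<in> K0" "t = phi x" by blast
      show "t \<in> V0" unfolding pbV_iff x(2) phi_def using bxp[OF x(1)] by blast
    qed
    have "\<forall>x\<in>K0. \<forall>z\<in>K0. (x, z) \<in> gE C \<longrightarrow> (phi x, phi z) \<in> gE (V0, E0)"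
    proof (intro ballI impI)
      fix x z assume xz: "x \<in> K0" "z \<in> K0" "(x, z) \<in> gE C"
      have "(bx x, bx z) \<in> gE B" using all4 bxp[OF xz(1)] bxp[OF xz(2)] by blast
      then show "(phi x, phi z) \<in> gE (V0, E0)" unfolding gE_pair pbE_iff phi_def
        using bxp[OF xz(1)] bxp[OF xz(2)] xz(3) by blast
    qed
    then have Tc: "connected_in (V0, E0) (phi ` K0)" using K0c by (intro conn_image)
    have "phi c = e b c" unfolding phi_def bx_def using b(3) by simp
    then have ebc: "e b c \<in> phi ` K0" using cK0 by (metis imageI)
    have prT: "\<forall>t\<in>phi ` K0. pr t = b \<or> pr t = b'"
      using bxp unfolding phi_def by (auto simp: pr_e)
    have "pr (phi c') = b'" unfolding phi_def pr_e bx_def using c'(2) False by simp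
    then have "\<exists>t\<in>phi ` K0. pr t = b'" using c'(1) by blast
    then show ?thesis using TV Tc ebc prT by blast
  qed
qed


lemma Ds_elem:
  assumes "z \<in> Ds"
  obtains c where "z = e (pr z) c" "pr z \<in> gV B" "c \<in> gV C" "f (pr z) = g c"
proof -
  have "z \<in> V0" using assms Ds_sub by blast
  then obtain b c where h: "z = e b c" "b \<in> gV B" "c \<in> gV C" "f b = g c" unfolding pbV_iff by blast
  have "pr z = b" using h(1) pr_e by simp
  then show ?thesis using h that by blast
qed

lemma lift_D:
  assumes z: "z \<in> Ds" and bb': "(pr z, b') \<in> gE B"
  shows "\<exists>T. T \<subseteq> Ds \<and> connected_in DD T \<and> z \<in> T \<and> (\<forall>t\<in>T. pr t = pr z \<or> pr t = b')
           \<and> (\<exists>t\<in>T. pr t = b')"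
proof -
  obtain c where c: "z = e (pr z) c" "pr z \<in> gV B" "c \<in> gV C" "f (pr z) = g c"
    using Ds_elem[OF z] by blast
  obtain T where T: "T \<subseteq> V0" "connected_in (V0, E0) T" "e (pr z) c \<in> T"
      "\<forall>t\<in>T. pr t = pr z \<or> pr t = b'" "\<exists>t\<in>T. pr t = b'"
    using lift[OF c(2) c(3) c(4) bb'] by blast
  have zT: "z \<in> T" using T(3) c(1) by simp
  have TD: "T \<subseteq> Ds" using T(2) T(1) zT z by (rule comp_max2)
  have "connected_in DD T" using connD[OF TD] T(2) by simp
  then show ?thesis using TD zT T(4) T(5) by blast
qed

lemma key:
  assumes Q: "Q \<subseteq> gV B" "connected_in B Q" and y: "y \<in> Ds" "pr y \<in> Q"
  shows "Q \<subseteq> pr ` component_of DD (Ds \<inter> pr -` Q) y"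
proof (rule ccontr)
  define K where "K = component_of DD (Ds \<inter> pr -` Q) y"
  assume "\<not> Q \<subseteq> pr ` component_of DD (Ds \<inter> pr -` Q) y"
  then have nQ: "\<not> Q \<subseteq> pr ` K" unfolding K_def .
  have yS: "y \<in> Ds \<inter> pr -` Q" using y by simp
  have yV: "y \<in> gV DD" using y by simp
  have yK: "y \<in> K" unfolding K_def by (rule comp_mem[OF D_graph yS yV])
  have KS: "K \<subseteq> Ds \<inter> pr -` Q" unfolding K_def by (rule comp_sub)
  have "pr y \<in> Q \<inter> pr ` K" using yK y(2) by simp
  then have "Q \<inter> pr ` K \<noteq> {}" by (rule ex_in_conv[THEN iffD1, OF exI])
  moreover have "Q - pr ` K \<noteq> {}" using nQ by simp
  moreover have "(Q \<inter> pr ` K) \<union> (Q - pr ` K) = Q" by blast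
  ultimately have "\<exists>a\<in>Q \<inter> pr ` K. \<exists>b\<in>Q - pr ` K. (a, b) \<in> gE B"
    by (rule conn_edge[OF Q(2)])
  then obtain b b' where bb: "b \<in> Q \<inter> pr ` K" "b' \<in> Q - pr ` K" "(b, b') \<in> gE B"
    by (elim bexE) (rule that; assumption)
  obtain z where z: "z \<in> K" "pr z = b" using bb(1) by auto
  have zD: "z \<in> Ds" using z(1) KS by blast
  obtain T where T: "T \<subseteq> Ds" "connected_in DD T" "z \<in> T" "\<forall>t\<in>T. pr t = pr z \<or> pr t = b'"
      "\<exists>t\<in>T. pr t = b'"
  proof -
    have "(pr z, b') \<in> gE B" using bb(3) z(2) by simp
    from lift_D[OF zD this] show ?thesis by (elim exE conjE) (rule that, assumption+)
  qed
  have "T \<subseteq> Ds \<inter> pr -` Q" using T(1) T(4) z(2) bb(1) bb(2) by auto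
  then have "T \<subseteq> K" unfolding K_def by (rule comp_max2[OF T(2) _ T(3) z(1)[unfolded K_def]])
  then have "b' \<in> pr ` K" using T(5) by blast
  then show False using bb(2) by blast
qed

lemma pr_conf:
  assumes Bc: "graph_connected B"
  shows "confluent DD B pr"
  unfolding confluent_def
proof (intro conjI allI impI)
  have prV: "pr ` Ds \<subseteq> gV B"
  proof
    fix b assume "b \<in> pr ` Ds"
    then obtain z where z: "z \<in> Ds" "b = pr z" by auto
    obtain c where "z = e (pr z) c" "pr z \<in> gV B" by (rule Ds_elem[OF z(1)])
    then show "b \<in> gV B" using z(2) by simp
  qed
  have prE: "(pr x, pr y) \<in> gE B" if "(x, y) \<in> E0 \<inter> Ds \<times> Ds" for x y
  proof -
    from that have "(x, y) \<in> E0" by simp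
    then obtain b c b' c' where h: "x = e b c" "y = e b' c'" "(b, b') \<in> gE B"
      unfolding pbE_iff by blast
    then show ?thesis using pr_e by simp
  qed
  have hom: "homomorphism DD B pr" unfolding homomorphism_def gV_pair gE_pair
  proof
    show "pr ` Ds \<subseteq> gV B" by (rule prV)
    show "\<forall>(a, b)\<in>E0 \<inter> Ds \<times> Ds. (pr a, pr b) \<in> gE B" using prE by auto
  qed
  have VB: "gV B \<subseteq> pr ` Ds"
  proof -
    have Bc': "connected_in B (gV B)" using Bc unfolding graph_connected_def .
    have pv0: "pr v0 \<in> gV B" using prV v0_Ds by (rule subsetD[OF _ imageI])
    have 1: "gV B \<subseteq> pr ` component_of DD (Ds \<inter> pr -` gV B) v0"
      by (rule key[OF order_refl Bc' v0_Ds pv0])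
    have "component_of DD (Ds \<inter> pr -` gV B) v0 \<subseteq> Ds \<inter> pr -` gV B" by (rule comp_sub)
    then have "component_of DD (Ds \<inter> pr -` gV B) v0 \<subseteq> Ds" by simp
    then have "pr ` component_of DD (Ds \<inter> pr -` gV B) v0 \<subseteq> pr ` Ds" by (rule image_mono)
    then show ?thesis using 1 by (rule subset_trans[rotated])
  qed
  have EB: "gE B \<subseteq> (\<lambda>(a, b). (pr a, pr b)) ` (E0 \<inter> Ds \<times> Ds)"
  proof
    fix p assume p: "p \<in> gE B"
    obtain b b' where pb: "p = (b, b')" by (cases p)
    have "b \<in> gV B" using graph_edgeV[OF gB] p pb by simp
    then have "b \<in> pr ` Ds" using VB by (rule subsetD[rotated])
    then obtain z where z: "z \<in> Ds" "pr z = b" by auto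
    have "z \<in> V0" using Ds_sub z(1) by (rule subsetD)
    then have zz: "(z, z) \<in> E0" using graph_refl[OF D0_graph, of z] by simp
    show "p \<in> (\<lambda>(a, b). (pr a, pr b)) ` (E0 \<inter> Ds \<times> Ds)"
    proof (cases "b = b'")
      case True
      have "(z, z) \<in> E0 \<inter> Ds \<times> Ds" using zz z by simp
      moreover have "p = (\<lambda>(a, b). (pr a, pr b)) (z, z)" using pb True z by simp
      ultimately show ?thesis by (rule rev_image_eqI)
    next
      case False
      obtain T where T: "T \<subseteq> Ds" "connected_in DD T" "z \<in> T" "\<forall>t\<in>T. pr t = pr z \<or> pr t = b'"
          "\<exists>t\<in>T. pr t = b'"
      proof -
        have "(pr z, b') \<in> gE B" using p pb z(2) by simp
        from lift_D[OF z(1) this] show ?thesis by (elim exE conjE) (rule that, assumption+)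
      qed
      have "z \<in> T \<inter> pr -` {b}" using T(3) z(2) by simp
      then have "T \<inter> pr -` {b} \<noteq> {}" by auto
      moreover have "T \<inter> pr -` {b'} \<noteq> {}" using T(5) by auto
      moreover have "(T \<inter> pr -` {b}) \<union> (T \<inter> pr -` {b'}) = T" using T(4) z(2) by auto
      ultimately have "\<exists>u\<in>T \<inter> pr -` {b}. \<exists>w\<in>T \<inter> pr -` {b'}. (u, w) \<in> gE DD"
        by (rule conn_edge[OF T(2)])
      then obtain u w where uw: "u \<in> T \<inter> pr -` {b}" "w \<in> T \<inter> pr -` {b'}" "(u, w) \<in> gE DD"
        by (elim bexE) (rule that; assumption)
      have "(u, w) \<in> E0 \<inter> Ds \<times> Ds" using uw by simp
      moreover have "p = (\<lambda>(a, b). (pr a, pr b)) (u, w)" using uw pb by simp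
      ultimately show ?thesis by (rule rev_image_eqI)
    qed
  qed
  have EB2: "(\<lambda>(a, b). (pr a, pr b)) ` (E0 \<inter> Ds \<times> Ds) \<subseteq> gE B"
  proof
    fix p assume "p \<in> (\<lambda>(a, b). (pr a, pr b)) ` (E0 \<inter> Ds \<times> Ds)"
    then obtain x y where "(x, y) \<in> E0 \<inter> Ds \<times> Ds" "p = (pr x, pr y)" by auto
    then show "p \<in> gE B" using prE by simp
  qed
  have V: "pr ` Ds = gV B" using prV VB by (rule subset_antisym)
  have E: "(\<lambda>(a, b). (pr a, pr b)) ` (E0 \<inter> Ds \<times> Ds) = gE B" using EB2 EB by (rule subset_antisym)
  show "epimorphism DD B pr" unfolding epimorphism_def gV_pair gE_pair using hom V E by simp
next
  fix Q K assume Q: "Q \<subseteq> gV B \<and> connected_in B Q" and K: "is_component DD (gV DD \<inter> pr -` Q) K"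
  obtain y where y: "y \<in> Ds \<inter> pr -` Q" and Kd: "K = component_of DD (Ds \<inter> pr -` Q) y"
    using K unfolding is_component_def gV_pair by auto
  have "K \<subseteq> Ds \<inter> pr -` Q" unfolding Kd by (rule comp_sub)
  then have 1: "pr ` K \<subseteq> Q" by auto
  have 2: "Q \<subseteq> pr ` K" unfolding Kd
  proof (rule key)
    show "Q \<subseteq> gV B" "connected_in B Q" using Q by simp_all
    show "y \<in> Ds" "pr y \<in> Q" using y by simp_all
  qed
  from 1 2 show "pr ` K = Q" by (rule subset_antisym)
qed

end


lemma amalg:
  assumes A: "A \<in> finite_connected_graphs" and B: "B \<in> finite_connected_graphs"
    and C: "C \<in> finite_connected_graphs"
    and cf: "confluent B A f" and cg: "confluent C A g"
  shows "\<exists>D\<in>finite_connected_graphs. \<exists>f0 g0. confluent D B f0 \<and> confluent D C g0 \<and>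
           (\<forall>x\<in>gV D. f (f0 x) = g (g0 x))"
proof -
  have gA: "is_graph A" and gB: "is_graph B" and gC: "is_graph C"
    and fB: "finite (gV B)" and fC: "finite (gV C)" and neA: "gV A \<noteq> {}"
    and cB: "graph_connected B" and cC: "graph_connected C"
    using A B C unfolding finite_connected_graphs_def by auto
  have ef: "epimorphism B A f" and eg: "epimorphism C A g" using cf cg unfolding confluent_def by auto
  have hf: "homomorphism B A f" and hg: "homomorphism C A g"
    using ef eg unfolding epimorphism_def by auto
  have fV: "f ` gV B = gV A" and gVV: "g ` gV C = gV A" using ef eg unfolding epimorphism_def by auto
  obtain a where a: "a \<in> gV A" using neA by auto
  obtain b where b: "b \<in> gV B" "f b = a" using a fV by (metis imageE)
  obtain c where c: "c \<in> gV C" "g c = a" using a gVV by (metis imageE)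
  define e :: "nat \<Rightarrow> nat \<Rightarrow> nat" where "e = (\<lambda>b c. prod_encode (b, c))"
  define pr1 :: "nat \<Rightarrow> nat" where "pr1 = (\<lambda>x. fst (prod_decode x))"
  define pr2 :: "nat \<Rightarrow> nat" where "pr2 = (\<lambda>x. snd (prod_decode x))"
  define v0 where "v0 = e b c"
  have pr1e: "\<And>b c. pr1 (e b c) = b" unfolding pr1_def e_def by simp
  have pr2e: "\<And>c b. pr2 ((\<lambda>c b. e b c) c b) = c" unfolding pr2_def e_def by simp
  have v0V: "v0 \<in> pbV B C f g e" unfolding pbV_iff v0_def using b c by (intro exI[of _ b] exI[of _ c]) simp
  note sV = pbV_swap[where B=B and C=C and f=f and g=g and e=e]
  note sE = pbE_swap[where B=B and C=C and f=f and g=g and e=e]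
  have v0V': "v0 \<in> pbV C B g f (\<lambda>c b. e b c)" using v0V unfolding sV .
  define Ds where "Ds = component_of (pbV B C f g e, pbE B C f g e) (pbV B C f g e) v0"
  define D where "D = (Ds, pbE B C f g e \<inter> Ds \<times> Ds)"
  note ctx = gA gB gC hf cg pr1e v0V
  note ctx' = gA gC gB hg cf pr2e v0V'
  have c1: "confluent D B pr1"
    unfolding D_def Ds_def by (rule pr_conf[OF ctx cB])
  have c2: "confluent D C pr2"
    using pr_conf[OF ctx' cC] unfolding D_def Ds_def sV sE .
  have gD: "is_graph D" unfolding D_def Ds_def by (rule D_graph[OF ctx])
  have cD: "graph_connected D" unfolding D_def Ds_def by (rule D_connected[OF ctx])
  have v0D: "v0 \<in> Ds" unfolding Ds_def by (rule v0_Ds[OF ctx])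
  have "Ds \<subseteq> pbV B C f g e" unfolding Ds_def by (rule Ds_sub[OF ctx])
  moreover have "pbV B C f g e \<subseteq> (\<lambda>(b, c). e b c) ` (gV B \<times> gV C)"
    unfolding pbV_def by auto
  moreover have "finite ((\<lambda>(b, c). e b c) ` (gV B \<times> gV C))" using fB fC by simp
  ultimately have finD: "finite Ds" by (meson finite_subset)
  have DK: "D \<in> finite_connected_graphs"
    unfolding finite_connected_graphs_def using gD cD finD v0D unfolding D_def by auto
  have comm: "\<forall>x\<in>gV D. f (pr1 x) = g (pr2 x)"
  proof
    fix x assume "x \<in> gV D"
    then have x: "x \<in> Ds" unfolding D_def by simp
    have "x \<in> pbV B C f g e" using x \<open>Ds \<subseteq> pbV B C f g e\<close> by (rule subsetD[rotated])
    then obtain b' c' where h: "x = e b' c'" "f b' = g c'" unfolding pbV_iff by blast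
    show "f (pr1 x) = g (pr2 x)" using h unfolding pr1_def pr2_def e_def by simp
  qed
  show ?thesis using DK c1 c2 comm by blast
qed

lemma conf_point:
  assumes gD: "is_graph D" and ne: "gV D \<noteq> {}"
  shows "confluent D ({0::nat}, {(0, 0)}) (\<lambda>_. 0)"
  unfolding confluent_def
proof (intro conjI allI impI)
  obtain x where x: "x \<in> gV D" using ne by auto
  have xx: "(x, x) \<in> gE D" using graph_refl[OF gD x] .
  have V: "(\<lambda>_. 0::nat) ` gV D = {0}" using ne by auto
  have E: "(\<lambda>(a, b). ((\<lambda>_. 0::nat) a, (\<lambda>_. 0::nat) b)) ` gE D = {(0, 0)}" using xx by auto
  show "epimorphism D ({0::nat}, {(0, 0)}) (\<lambda>_. 0)"
    unfolding epimorphism_def homomorphism_def gV_pair gE_pair using V E by auto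
next
  fix Q K assume Q: "Q \<subseteq> gV ({0::nat}, {(0, 0)}) \<and> connected_in ({0::nat}, {(0, 0)}) Q"
    and K: "is_component D (gV D \<inter> (\<lambda>_. 0) -` Q) K"
  obtain y where y: "y \<in> gV D \<inter> (\<lambda>_. 0) -` Q" and Kd: "K = component_of D (gV D \<inter> (\<lambda>_. 0) -` Q) y"
    using K unfolding is_component_def by auto
  have "0 \<in> Q" using y by (auto split: if_splits)
  then have Q0: "Q = {0}" using Q by auto
  have "y \<in> K" unfolding Kd using y by (intro comp_mem[OF gD]) auto
  then show "(\<lambda>_. 0) ` K = Q" using Q0 by auto
qed

lemma point_K: "({0::nat}, {(0, 0)}) \<in> finite_connected_graphs"
proof -
  have g: "is_graph ({0::nat}, {(0, 0)})" unfolding is_graph_def by auto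
  have "connected_in ({0::nat}, {(0, 0)}) {0}" by (rule conn_single[OF g]) simp
  then show ?thesis unfolding finite_connected_graphs_def graph_connected_def using g by simp
qed

theorem mainTheorem1:
  shows "projective_Fraisse_class finite_connected_graphs (\<lambda>A B f. confluent A B f)"
  unfolding projective_Fraisse_class_def
proof (intro conjI)
  show "\<forall>A\<in>finite_connected_graphs. is_graph A \<and> finite (gV A)"
    unfolding finite_connected_graphs_def by auto
  show "\<forall>A B f. confluent A B f \<longrightarrow> epimorphism A B f" unfolding confluent_def by auto
  show "\<exists>S. countable S \<and> S \<subseteq> finite_connected_graphs \<and>
      (\<forall>A\<in>finite_connected_graphs. \<exists>B\<in>S. \<exists>h. isomorphism A B h)"
  proof (intro exI conjI)
    have sub: "finite_connected_graphs \<subseteq> Collect finite \<times> Collect finite"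
    proof
      fix G assume G: "G \<in> finite_connected_graphs"
      obtain V E where GVE: "G = (V, E)" by (cases G)
      have "is_graph G" "finite (gV G)" using G unfolding finite_connected_graphs_def by auto
      then have "finite V" "E \<subseteq> V \<times> V" unfolding is_graph_def GVE by auto
      then have "finite E" by (meson finite_SigmaI finite_subset)
      then show "G \<in> Collect finite \<times> Collect finite" using \<open>finite V\<close> GVE by simp
    qed
    have "countable ((Collect finite :: nat set set) \<times> (Collect finite :: (nat \<times> nat) set set))"
      by (intro countable_SIGMA countable_Collect_finite)
    then show "countable finite_connected_graphs" using sub by (rule countable_subset[rotated])
    show "finite_connected_graphs \<subseteq> finite_connected_graphs" by simp
    show "\<forall>A\<in>finite_connected_graphs. \<exists>B\<in>finite_connected_graphs. \<exists>h. isomorphism A B h"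
    proof
      fix A assume "A \<in> finite_connected_graphs"
      moreover have "isomorphism A A id"
        unfolding isomorphism_def epimorphism_def homomorphism_def by (auto simp: case_prod_beta)
      ultimately show "\<exists>B\<in>finite_connected_graphs. \<exists>h. isomorphism A B h" by blast
    qed
  qed
  show "\<forall>A\<in>finite_connected_graphs. \<forall>B\<in>finite_connected_graphs. \<forall>C\<in>finite_connected_graphs.
      \<forall>f g. confluent A B f \<and> confluent B C g \<longrightarrow> confluent A C (g \<circ> f)"
    unfolding finite_connected_graphs_def using conf_comp by blast
  show "\<forall>A\<in>finite_connected_graphs. confluent A A id"
    unfolding finite_connected_graphs_def using conf_id by blast
  show "\<forall>B\<in>finite_connected_graphs. \<forall>C\<in>finite_connected_graphs.
      \<exists>D\<in>finite_connected_graphs. \<exists>f g. confluent D B f \<and> confluent D C g"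
  proof (intro ballI)
    fix B C assume B: "B \<in> finite_connected_graphs" and C: "C \<in> finite_connected_graphs"
    have cB: "confluent B ({0::nat}, {(0, 0)}) (\<lambda>_. 0)" and cC: "confluent C ({0::nat}, {(0, 0)}) (\<lambda>_. 0)"
      using B C unfolding finite_connected_graphs_def by (auto intro: conf_point)
    from amalg[OF point_K B C cB cC]
    show "\<exists>D\<in>finite_connected_graphs. \<exists>f g. confluent D B f \<and> confluent D C g" by blast
  qed
  show "\<forall>A\<in>finite_connected_graphs. \<forall>B\<in>finite_connected_graphs. \<forall>C\<in>finite_connected_graphs.
      \<forall>f g. confluent B A f \<and> confluent C A g \<longrightarrow>
        (\<exists>D\<in>finite_connected_graphs. \<exists>f0 g0. confluent D B f0 \<and> confluent D C g0 \<and>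
           (\<forall>x\<in>gV D. f (f0 x) = g (g0 x)))"
  proof (intro ballI allI impI)
    fix A B C f g
    assume "A \<in> finite_connected_graphs" "B \<in> finite_connected_graphs" "C \<in> finite_connected_graphs"
      and fg: "confluent B A f \<and> confluent C A g"
    then show "\<exists>D\<in>finite_connected_graphs. \<exists>f0 g0. confluent D B f0 \<and> confluent D C g0 \<and>
           (\<forall>x\<in>gV D. f (f0 x) = g (g0 x))"
      using amalg[of A B C f g] by simp
  qed
qed

end
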